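(* Let $o_{n,i}$ be the probability that a random Bernoulli text of length $n$ contains exactly $i$ clumps of $w$. Then $$\sum_{n,i\ge0}o_{n,i}\,u^i z^n=N(z)+\frac{u\,R(z)\,U(z)}{1-u\,M(z)+(u-1)K(z)}.$$
   Context: Let $\mathcal{A}$ be a finite alphabet with $|\mathcal{A}|\ge2$ and $w\in\mathcal{A}^*$ a fixed word of length $\ell=|w|\ge 2$. Bernoulli model: each letter $a$ has probability $p_a>0$, $\sum_a p_a=1$, $\mathbf{P}(a_1\cdots a_n)=\prod_i p_{a_i}$; for a language $L$, $L(z)=\sum_{x\in L}\mathbf{P}(x)z^{|x|}$; $\pi_w=\mathbf{P}(w)$. Occurrences of $w$ are position intervals where $w$ appears; two occurrences overlap if their intervals share a position; clumps are equivalence classes of occurrences under the transitive closure of overlapping. Autocorrelation set $\mathcal{C}=\{\epsilon\}\cup\{e\in\mathcal{A}^+: |e|<\ell,\ \exists e'\in\mathcal{A}^+,\ we=e'w\}$, $\mathcal{C}_\circ=\mathcal{C}\setminus\{\epsilon\}$, $\mathcal{K}=\mathcal{C}_\circ\setminus\mathcal{C}_\circ\mathcal{A}^+$ with generating function $K(z)$. Languages: $\mathcal{R}=\{r\in\mathcal{A}^*w: \text{no } r=xwy,\ |y|>0\}$; $\mathcal{M}=\{m\in\mathcal{A}^+: wm\in\mathcal{A}^*w,\ \text{no } wm=xwy,\ |x|>0,|y|>0\}$; $\mathcal{U}=\{u\in\mathcal{A}^*: \text{no } wu=xwy,\ |x|>0\}$; $\mathcal{N}=\{n: w\text{ not a factor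 of }n\}$, with generating functions $R(z),M(z),U(z),N(z)$; explicitly, with $C(z)$ the generating function of $\mathcal{C}$ and $D(z)=\pi_w z^{\ell}+(1-z)C(z)$: $R=\pi_w z^\ell/D$, $M=1+(z-1)/D$, $U=1/D$, $N=C/D$. *)

theory Defs
  imports "HOL-Computational_Algebra.Formal_Power_Series"
begin

definition wprob :: "('a \<Rightarrow> real) \<Rightarrow> 'a list \<Rightarrow> real" where
  "wprob p x = prod_list (map p x)"

definition lang_gf :: "('a::finite \<Rightarrow> real) \<Rightarrow> 'a list set \<Rightarrow> real fps" where
  "lang_gf p L = Abs_fps (\<lambda>n. \<Sum>x\<in>{x. x \<in> L \<and> length x = n}. wprob p x)"

definition occs :: "'a list \<Rightarrow> 'a list \<Rightarrow> nat set" where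
  "occs w x = {i. i + length w \<le> length x \<and> take (length w) (drop i x) = w}"

definition overlap_rel :: "'a list \<Rightarrow> 'a list \<Rightarrow> (nat \<times> nat) set" where
  "overlap_rel w x = {(i, j). i \<in> occs w x \<and> j \<in> occs w x \<and>
      (\<exists>k. i \<le> k \<and> k < i + length w \<and> j \<le> k \<and> k < j + length w)}"

definition clumps :: "'a list \<Rightarrow> 'a list \<Rightarrow> nat set set" where
  "clumps w x = occs w x // (overlap_rel w x)\<^sup>*"

definition clump_prob :: "('a::finite \<Rightarrow> real) \<Rightarrow> 'a list \<Rightarrow> nat \<Rightarrow> nat \<Rightarrow> real" where
  "clump_prob p w n i = (\<Sum>x\<in>{x. length x = n \<and> card (clumps w x) = i}. wprob p x)"

definition autocorr :: "'a list \<Rightarrow> 'a list set" where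
  "autocorr w = {[]} \<union> {e. e \<noteq> [] \<and> length e < length w \<and>
                          (\<exists>e'. e' \<noteq> [] \<and> w @ e = e' @ w)}"

definition autocorr0 :: "'a list \<Rightarrow> 'a list set" where
  "autocorr0 w = autocorr w - {[]}"

definition langK :: "'a list \<Rightarrow> 'a list set" where
  "langK w = autocorr0 w - {c @ y | c y. c \<in> autocorr0 w \<and> y \<noteq> []}"

definition langR :: "'a list \<Rightarrow> 'a list set" where
  "langR w = {r. (\<exists>x. r = x @ w) \<and> \<not> (\<exists>x y. r = x @ w @ y \<and> y \<noteq> [])}"

definition langM :: "'a list \<Rightarrow> 'a list set" where
  "langM w = {m. m \<noteq> [] \<and> (\<exists>x. w @ m = x @ w) \<and>
                 \<not> (\<exists>x y. w @ m = x @ w @ y \<and> x \<noteq> [] \<and> y \<noteq> [])}"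

definition langU :: "'a list \<Rightarrow> 'a list set" where
  "langU w = {u. \<not> (\<exists>x y. w @ u = x @ w @ y \<and> x \<noteq> [])}"

definition langN :: "'a list \<Rightarrow> 'a list set" where
  "langN w = {n. \<not> (\<exists>x y. n = x @ w @ y)}"

end

theory Submission
  imports Defs
begin


definition gfw :: "('a::finite \<Rightarrow> real) \<Rightarrow> ('a list \<Rightarrow> real) \<Rightarrow> 'a list set \<Rightarrow> real fps" where
  "gfw p f L = Abs_fps (\<lambda>n. \<Sum>x\<in>{x. x \<in> L \<and> length x = n}. wprob p x * f x)"

lemma fin_len: "finite {x::'a::finite list. P x \<and> length x = n}"
proof -
  have "finite {xs::'a list. set xs \<subseteq> UNIV \<and> length xs = n}"
    by (rule finite_lists_length_eq) simp
  then show ?thesis by (rule finite_subset[rotated]) auto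
qed

lemma lang_gf_gfw: "lang_gf p L = gfw p (\<lambda>_. 1) L"
  by (simp add: lang_gf_def gfw_def)

lemma gfw_cong: "(\<And>x. x \<in> L \<Longrightarrow> f x = g x) \<Longrightarrow> gfw p f L = gfw p g L"
  unfolding gfw_def by (intro arg_cong[where f=Abs_fps] ext sum.cong) auto

lemma gfw_const: "gfw p (\<lambda>_. c) L = fps_const c * lang_gf p L"
  by (simp add: gfw_def lang_gf_def fps_eq_iff sum_distrib_left mult.commute)

lemma gfw_union: "A \<inter> B = {} \<Longrightarrow> gfw p f (A \<union> B) = gfw p f A + gfw p f B"
proof -
  assume d: "A \<inter> B = {}"
  have "\<And>n. {x. x \<in> A \<union> B \<and> length x = n} = {x. x \<in> A \<and> length x = n} \<union> {x. x \<in> B \<and> length x = n}"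
    by auto
  then show ?thesis unfolding gfw_def fps_eq_iff
    using d by (auto simp: fin_len intro!: sum.union_disjoint)
qed

lemma wprob_append: "wprob p (a @ b) = wprob p a * wprob p b"
  by (simp add: wprob_def)

lemma gf_concat:
  assumes img: "(\<lambda>(a,b). a @ b) ` (A \<times> B) = C"
    and inj: "inj_on (\<lambda>(a,b). a @ b) (A \<times> B)"
    and mult: "\<And>a b. a \<in> A \<Longrightarrow> b \<in> B \<Longrightarrow> h (a @ b) = f a * g b"
  shows "gfw p h C = gfw p f A * gfw p g B"
proof (rule fps_ext)
  fix n
  define P where "P = {(a,b). a \<in> A \<and> b \<in> B \<and> length a + length b = n}"
  have P_eq: "P = (\<Union>i\<le>n. {a. a \<in> A \<and> length a = i} \<times> {b. b \<in> B \<and> length b = n - i})"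
    unfolding P_def by auto
  have finP: "\<And>i. finite ({a. a \<in> A \<and> length a = i} \<times> {b. b \<in> B \<and> length b = n - i})"
    by (simp add: fin_len)
  have "fps_nth (gfw p f A * gfw p g B) n =
     (\<Sum>i\<le>n. (\<Sum>a\<in>{a. a \<in> A \<and> length a = i}. wprob p a * f a) *
              (\<Sum>b\<in>{b. b \<in> B \<and> length b = n - i}. wprob p b * g b))"
    by (simp add: gfw_def fps_mult_nth atLeast0AtMost)
  also have "\<dots> = (\<Sum>i\<le>n. \<Sum>ab\<in>{a. a \<in> A \<and> length a = i} \<times> {b. b \<in> B \<and> length b = n - i}.
                 wprob p (fst ab) * f (fst ab) * (wprob p (snd ab) * g (snd ab)))"
    by (simp add: sum_product sum.cartesian_product case_prod_beta)
  also have "\<dots> = (\<Sum>ab\<in>P. wprob p (fst ab) * f (fst ab) * (wprob p (snd ab) * g (snd ab)))"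
    unfolding P_eq
    by (rule sum.UNION_disjoint[symmetric]) (auto simp: finP)
  also have "\<dots> = (\<Sum>ab\<in>P. wprob p (fst ab @ snd ab) * h (fst ab @ snd ab))"
    by (rule sum.cong) (auto simp: P_def mult wprob_append)
  also have "\<dots> = (\<Sum>x\<in>(\<lambda>(a,b). a @ b) ` P. wprob p x * h x)"
  proof -
    have "inj_on (\<lambda>(a,b). a @ b) P" using inj by (rule inj_on_subset) (auto simp: P_def)
    then show ?thesis by (subst sum.reindex) (auto simp: case_prod_beta)
  qed
  also have "(\<lambda>(a,b). a @ b) ` P = {x. x \<in> C \<and> length x = n}"
    using img unfolding P_def by auto
  finally show "fps_nth (gfw p h C) n = fps_nth (gfw p f A * gfw p g B) n"
    by (simp add: gfw_def)
qed



lemma occs_iff: "i \<in> occs w s \<longleftrightarrow> (\<exists>x y. s = x @ w @ y \<and> length x = i)"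
proof
  assume "i \<in> occs w s"
  then have h: "i + length w \<le> length s" "take (length w) (drop i s) = w" by (auto simp: occs_def)
  have "s = take i s @ take (length w) (drop i s) @ drop (length w) (drop i s)" by (metis append_take_drop_id)
  then have "s = take i s @ w @ drop (i + length w) s" using h by (simp add: add.commute)
  moreover have "length (take i s) = i" using h by simp
  ultimately show "\<exists>x y. s = x @ w @ y \<and> length x = i" by blast
next
  assume "\<exists>x y. s = x @ w @ y \<and> length x = i"
  then show "i \<in> occs w s" by (auto simp: occs_def)
qed

lemma occs_app_left: "i \<in> occs w x \<Longrightarrow> i \<in> occs w (x @ y)"
  by (auto simp: occs_def)

lemma occs_app_left_rev: "i \<in> occs w (x @ y) \<Longrightarrow> i + length w \<le> length x \<Longrightarrow> i \<in> occs w x"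
  by (auto simp: occs_def)

lemma occs_shift: "j \<in> occs w y \<Longrightarrow> length x + j \<in> occs w (x @ y)"
  by (auto simp: occs_def)

lemma occs_shift_rev: "i \<in> occs w (x @ y) \<Longrightarrow> length x \<le> i \<Longrightarrow> i - length x \<in> occs w y"
  by (auto simp: occs_def)

lemma occs_bound: "i \<in> occs w x \<Longrightarrow> i + length w \<le> length x"
  by (auto simp: occs_def)

lemma occs_finite: "finite (occs w x)"
  by (rule finite_subset[of _ "{..length x}"]) (auto simp: occs_def)

lemma end_occ: "length a \<in> occs w (a @ w)"
  by (simp add: occs_def)

lemma occs_after_E:
  assumes "i \<in> occs w (t @ w @ y)"
  shows "(i \<in> occs w (t @ w) \<and> i \<le> length t) \<or> (length t \<le> i \<and> i - length t \<in> occs w (w @ y))"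
proof (cases "i + length w \<le> length (t @ w)")
  case True
  then show ?thesis using occs_app_left_rev[of i w "t @ w" y] assms by auto
next
  case False
  then show ?thesis using occs_shift_rev[of i w t "w @ y"] assms by auto
qed

lemma no_occ_before_end: "(\<not> (\<exists>x y. r = x @ w @ y \<and> y \<noteq> [])) \<longleftrightarrow> (\<forall>i\<in>occs w r. length r \<le> i + length w)"
proof
  assume h: "\<not> (\<exists>x y. r = x @ w @ y \<and> y \<noteq> [])"
  show "\<forall>i\<in>occs w r. length r \<le> i + length w"
  proof
    fix i assume "i \<in> occs w r"
    then obtain x y where "r = x @ w @ y" "length x = i" by (auto simp: occs_iff)
    with h show "length r \<le> i + length w" by auto
  qed
next
  assume h: "\<forall>i\<in>occs w r. length r \<le> i + length w"
  show "\<not> (\<exists>x y. r = x @ w @ y \<and> y \<noteq> [])"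
  proof
    assume "\<exists>x y. r = x @ w @ y \<and> y \<noteq> []"
    then obtain x y where xy: "r = x @ w @ y" "y \<noteq> []" by auto
    then have "length x \<in> occs w r" by (auto simp: occs_iff)
    with h xy show False by auto
  qed
qed

lemma langR_iff: "r \<in> langR w \<longleftrightarrow> (\<exists>a. r = a @ w) \<and> (\<forall>i\<in>occs w r. length r \<le> i + length w)"
  unfolding langR_def using no_occ_before_end[of r w] by auto



definition starts :: "nat \<Rightarrow> nat set \<Rightarrow> nat set" where
  "starts L Oc = {i\<in>Oc. \<not> (\<exists>j\<in>Oc. j < i \<and> i < j + L)}"

definition cl :: "'a list \<Rightarrow> 'a list \<Rightarrow> nat" where
  "cl w x = card (starts (length w) (occs w x))"

lemma card_clumps:
  assumes Lw: "1 \<le> length w"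
  shows "card (clumps w x) = cl w x"
proof -
  define r where "r = overlap_rel w x"
  define Oc where "Oc = occs w x"
  define L where "L = length w"
  define S where "S = starts L Oc"
  have rO: "\<And>i j. (i,j) \<in> r \<Longrightarrow> i \<in> Oc \<and> j \<in> Oc" by (auto simp: r_def Oc_def overlap_rel_def)
  have symr: "sym r" unfolding sym_def r_def overlap_rel_def by blast
  have symrt: "sym (r\<^sup>*)" using symr by (rule sym_rtrancl)
  have ov: "\<And>i j. i \<in> Oc \<Longrightarrow> j \<in> Oc \<Longrightarrow> j \<le> i \<Longrightarrow> i < j + L \<Longrightarrow> (i,j) \<in> r"
  proof -
    fix i j assume h: "i \<in> Oc" "j \<in> Oc" "j \<le> i" "i < j + L"
    have "i \<le> i \<and> i < i + length w \<and> j \<le> i \<and> i < j + length w" using h Lw L_def by (cases w) auto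
    then show "(i,j) \<in> r" using h unfolding r_def overlap_rel_def Oc_def by blast
  qed
  have cls: "\<And>i j. (i,j) \<in> r\<^sup>* \<Longrightarrow> i \<in> Oc \<Longrightarrow> j \<in> Oc"
  proof -
    fix i j assume "(i,j) \<in> r\<^sup>*" "i \<in> Oc"
    then show "j \<in> Oc" by (induction rule: rtrancl_induct) (auto dest: rO)
  qed
  have lower: "\<And>s j. s \<in> S \<Longrightarrow> (s,j) \<in> r\<^sup>* \<Longrightarrow> s \<le> j"
  proof -
    fix s j assume sS: "s \<in> S" and sj: "(s,j) \<in> r\<^sup>*"
    from sj show "s \<le> j"
    proof (induction rule: rtrancl_induct)
      case base then show ?case by simp
    next
      case (step a b)
      show ?case
      proof (rule ccontr)
        assume "\<not> s \<le> b"
        then have bs: "b < s" by simp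
        from step(2) obtain k where k: "a \<le> k" "k < a + L" "b \<le> k" "k < b + L" "b \<in> Oc"
          by (auto simp: r_def overlap_rel_def L_def Oc_def)
        have "s < b + L" using k step(3) by simp
        then show False using sS bs k(5) by (auto simp: S_def starts_def)
      qed
    qed
  qed
  have same: "\<And>i m. (i,m) \<in> r\<^sup>* \<Longrightarrow> r\<^sup>*``{m} = r\<^sup>*``{i}"
  proof -
    fix i m assume im: "(i,m) \<in> r\<^sup>*"
    then have mi: "(m,i) \<in> r\<^sup>*" using symrt by (auto simp: sym_def)
    show "r\<^sup>*``{m} = r\<^sup>*``{i}"
      using im mi by (auto intro: rtrancl_trans)
  qed
  have minC: "\<And>C. C \<in> Oc // r\<^sup>* \<Longrightarrow> Min C \<in> S \<and> C = r\<^sup>*``{Min C}"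
  proof -
    fix C assume "C \<in> Oc // r\<^sup>*"
    then obtain i where i: "i \<in> Oc" "C = r\<^sup>*``{i}" by (auto elim: quotientE)
    have CO: "C \<subseteq> Oc" using i cls by auto
    have fin: "finite C" using CO occs_finite[of w x] Oc_def finite_subset by auto
    have ne: "i \<in> C" using i by auto
    have mC: "Min C \<in> C" using fin ne by (intro Min_in) auto
    have Ceq: "C = r\<^sup>*``{Min C}" using same[of i "Min C"] mC i by auto
    have "Min C \<in> S"
      unfolding S_def starts_def
    proof (intro CollectI conjI notI)
      show "Min C \<in> Oc" using mC CO by auto
    next
      assume "\<exists>j\<in>Oc. j < Min C \<and> Min C < j + L"
      then obtain j where j: "j \<in> Oc" "j < Min C" "Min C < j + L" by auto
      have "(Min C, j) \<in> r" using ov[of "Min C" j] j mC CO by auto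
      then have "j \<in> C" using Ceq by auto
      then have "Min C \<le> j" using fin by simp
      then show False using j by simp
    qed
    then show "Min C \<in> S \<and> C = r\<^sup>*``{Min C}" using Ceq by simp
  qed
  have bij: "bij_betw (\<lambda>s. r\<^sup>*``{s}) S (Oc // r\<^sup>*)"
  proof (rule bij_betw_imageI)
    show "inj_on (\<lambda>s. r\<^sup>*``{s}) S"
    proof (rule inj_onI)
      fix s s' assume s: "s \<in> S" "s' \<in> S" "r\<^sup>*``{s} = r\<^sup>*``{s'}"
      have "s' \<in> r\<^sup>*``{s}" using s(3) by auto
      then have "s \<le> s'" using lower s(1) by auto
      moreover have "s \<in> r\<^sup>*``{s'}" using s(3) by auto
      then have "s' \<le> s" using lower s(2) by auto
      ultimately show "s = s'" by simp
    qed
  next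
    show "(\<lambda>s. r\<^sup>*``{s}) ` S = Oc // r\<^sup>*"
    proof
      show "(\<lambda>s. r\<^sup>*``{s}) ` S \<subseteq> Oc // r\<^sup>*"
        by (auto simp: S_def starts_def intro: quotientI)
    next
      show "Oc // r\<^sup>* \<subseteq> (\<lambda>s. r\<^sup>*``{s}) ` S"
        using minC by blast
    qed
  qed
  show ?thesis
    using bij_betw_same_card[OF bij]
    by (simp add: clumps_def cl_def r_def Oc_def S_def L_def)
qed



definition E :: "'a list \<Rightarrow> 'a list set" where "E w = {x. \<exists>a. x = a @ w}"

lemma langN_iff: "n \<in> langN w \<longleftrightarrow> occs w n = {}"
proof -
  have "occs w n \<noteq> {} \<longleftrightarrow> (\<exists>x y. n = x @ w @ y)" using occs_iff[of _ w n] by blast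
  then show ?thesis unfolding langN_def by blast
qed

lemma langU_iff: "u \<in> langU w \<longleftrightarrow> (\<forall>i\<in>occs w (w @ u). i = 0)"
proof
  assume h: "u \<in> langU w"
  show "\<forall>i\<in>occs w (w @ u). i = 0"
  proof
    fix i assume "i \<in> occs w (w @ u)"
    then obtain x y where "w @ u = x @ w @ y" "length x = i" by (auto simp: occs_iff)
    with h show "i = 0" by (auto simp: langU_def)
  qed
next
  assume h: "\<forall>i\<in>occs w (w @ u). i = 0"
  show "u \<in> langU w" unfolding langU_def
  proof (clarify)
    fix x y assume xy: "w @ u = x @ w @ y" "x \<noteq> []"
    then have "length x \<in> occs w (w @ u)" by (auto simp: occs_iff)
    with h xy show False by auto
  qed
qed

lemma langM_iff: "m \<in> langM w \<longleftrightarrow> m \<noteq> [] \<and> (\<exists>a. w @ m = a @ w) \<and> (\<forall>i\<in>occs w (w @ m). i = 0 \<or> length m \<le> i)"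
proof
  assume h: "m \<in> langM w"
  have "\<forall>i\<in>occs w (w @ m). i = 0 \<or> length m \<le> i"
  proof
    fix i assume "i \<in> occs w (w @ m)"
    then obtain x y where xy: "w @ m = x @ w @ y" "length x = i" by (auto simp: occs_iff)
    show "i = 0 \<or> length m \<le> i"
    proof (rule ccontr)
      assume "\<not> (i = 0 \<or> length m \<le> i)"
      moreover have "length w + length m = length x + length w + length y" using arg_cong[OF xy(1), of length] by simp
      ultimately have "x \<noteq> []" "y \<noteq> []" using xy by auto
      with h xy show False by (auto simp: langM_def)
    qed
  qed
  then show "m \<noteq> [] \<and> (\<exists>a. w @ m = a @ w) \<and> (\<forall>i\<in>occs w (w @ m). i = 0 \<or> length m \<le> i)"
    using h by (auto simp: langM_def)
next
  assume h: "m \<noteq> [] \<and> (\<exists>a. w @ m = a @ w) \<and> (\<forall>i\<in>occs w (w @ m). i = 0 \<or> length m \<le> i)"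
  show "m \<in> langM w" unfolding langM_def
  proof (intro CollectI conjI notI)
    assume "\<exists>x y. w @ m = x @ w @ y \<and> x \<noteq> [] \<and> y \<noteq> []"
    then obtain x y where xy: "w @ m = x @ w @ y" "x \<noteq> []" "y \<noteq> []" by auto
    then have "length x \<in> occs w (w @ m)" by (auto simp: occs_iff)
    moreover have "length w + length m = length x + length w + length y" using arg_cong[OF xy(1), of length] by simp
    moreover have "length y > 0" "length x > 0" using xy by auto
    ultimately show False using h by fastforce
  qed (use h in auto)
qed

lemma langK_iff: "m \<in> langK w \<longleftrightarrow> m \<in> langM w \<and> length m < length w"
proof
  assume h: "m \<in> langK w"
  then have m0: "m \<noteq> []" "length m < length w" and ep: "\<exists>e'. e' \<noteq> [] \<and> w @ m = e' @ w"
    by (auto simp: langK_def autocorr0_def autocorr_def)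
  have nc: "\<not> (\<exists>c y. m = c @ y \<and> c \<in> autocorr0 w \<and> y \<noteq> [])"
    using h by (auto simp: langK_def)
  have "m \<in> langM w" unfolding langM_def
  proof (intro CollectI conjI notI)
    assume "\<exists>x y. w @ m = x @ w @ y \<and> x \<noteq> [] \<and> y \<noteq> []"
    then obtain x y where xy: "w @ m = x @ w @ y" "x \<noteq> []" "y \<noteq> []" by auto
    have lens: "length x + length y = length m" using arg_cong[OF xy(1), of length] by simp
    define c where "c = take (length x) m"
    have "take (length w + length x) (w @ m) = w @ c" by (simp add: c_def)
    moreover have "take (length w + length x) (x @ w @ y) = x @ w" by simp
    ultimately have wc: "w @ c = x @ w" using xy(1) by (simp add: add.commute)
    have lc: "length c = length x" using lens by (simp add: c_def)
    have "length y > 0" using xy(3) by simp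
    then have "c \<in> autocorr0 w"
      unfolding autocorr0_def autocorr_def using xy(2) wc lc lens m0(2) by auto
    moreover have "m = c @ drop (length x) m" by (simp add: c_def)
    moreover have "length x < length m" using lens \<open>length y > 0\<close> by linarith
    then have "drop (length x) m \<noteq> []" by simp
    ultimately show False using nc by blast
  qed (use m0 ep in auto)
  then show "m \<in> langM w \<and> length m < length w" using m0 by simp
next
  assume h: "m \<in> langM w \<and> length m < length w"
  then obtain a where a: "w @ m = a @ w" "m \<noteq> []" by (auto simp: langM_def)
  have "a \<noteq> []" using a arg_cong[OF a(1), of length] by auto
  then have mA: "m \<in> autocorr0 w" using a h by (auto simp: autocorr0_def autocorr_def)
  have "\<not> (\<exists>c y. m = c @ y \<and> c \<in> autocorr0 w \<and> y \<noteq> [])"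
  proof
    assume "\<exists>c y. m = c @ y \<and> c \<in> autocorr0 w \<and> y \<noteq> []"
    then obtain c y e' where cy: "m = c @ y" "y \<noteq> []" "e' \<noteq> []" "w @ c = e' @ w"
      by (auto simp: autocorr0_def autocorr_def)
    then have "w @ m = e' @ w @ y" by simp
    then show False using h cy unfolding langM_def by blast
  qed
  then show "m \<in> langK w" using mA by (auto simp: langK_def)
qed

lemma occ_decomp:
  assumes "i \<in> occs w x"
  shows "take (i + length w) x = take i x @ w" "drop i x = w @ drop (i + length w) x"
proof -
  have h: "take (length w) (drop i x) = w" using assms by (auto simp: occs_def)
  show "take (i + length w) x = take i x @ w" using h by (simp add: take_add)
  have "drop i x = take (length w) (drop i x) @ drop (length w) (drop i x)" by (rule append_take_drop_id[symmetric])
  moreover have "drop (length w) (drop i x) = drop (i + length w) x" by (simp add: add.commute)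
  ultimately show "drop i x = w @ drop (i + length w) x" using h by metis
qed



lemma occs_EM:
  assumes m: "m \<in> langM w"
  shows "occs w (a @ w @ m) = insert (length a + length m) (occs w (a @ w))"
proof -
  from m obtain b where b: "w @ m = b @ w" and mi: "\<forall>i\<in>occs w (w @ m). i = 0 \<or> length m \<le> i"
    by (auto simp: langM_iff)
  have lb: "length b = length m" using arg_cong[OF b, of length] by simp
  have "length m \<in> occs w (w @ m)" using end_occ[of b w] b lb by simp
  then have new: "length a + length m \<in> occs w (a @ w @ m)" using occs_shift[of "length m" w "w @ m" a] by simp
  show ?thesis
  proof
    show "insert (length a + length m) (occs w (a @ w)) \<subseteq> occs w (a @ w @ m)"
      using new occs_app_left[of _ w "a @ w" m] by auto
  next
    show "occs w (a @ w @ m) \<subseteq> insert (length a + length m) (occs w (a @ w))"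
    proof
      fix i assume i: "i \<in> occs w (a @ w @ m)"
      from occs_after_E[OF i] show "i \<in> insert (length a + length m) (occs w (a @ w))"
      proof
        assume "i \<in> occs w (a @ w) \<and> i \<le> length a" then show ?thesis by simp
      next
        assume h: "length a \<le> i \<and> i - length a \<in> occs w (w @ m)"
        have bnd: "i - length a + length w \<le> length w + length m" using occs_bound[OF conjunct2[OF h]] by simp
        from mi h have "i - length a = 0 \<or> length m \<le> i - length a" by auto
        then show ?thesis
        proof
          assume "i - length a = 0" then have "i = length a" using h by simp
          then show ?thesis using end_occ[of a w] by simp
        next
          assume "length m \<le> i - length a" then have "i = length a + length m" using bnd h by arith
          then show ?thesis by simp
        qed
      qed
    qed
  qed
qed

lemma occs_EU:
  assumes u: "u \<in> langU w"
  shows "occs w (a @ w @ u) = occs w (a @ w)"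
proof
  show "occs w (a @ w) \<subseteq> occs w (a @ w @ u)" using occs_app_left[of _ w "a @ w" u] by auto
next
  show "occs w (a @ w @ u) \<subseteq> occs w (a @ w)"
  proof
    fix i assume i: "i \<in> occs w (a @ w @ u)"
    from occs_after_E[OF i] show "i \<in> occs w (a @ w)"
    proof
      assume "i \<in> occs w (a @ w) \<and> i \<le> length a" then show ?thesis by simp
    next
      assume h: "length a \<le> i \<and> i - length a \<in> occs w (w @ u)"
      then have "i = length a" using u by (auto simp: langU_iff)
      then show ?thesis using end_occ[of a w] by simp
    qed
  qed
qed

lemma starts_insert:
  assumes "\<forall>j\<in>Oc. j < e"
  shows "starts L (insert e Oc) = starts L Oc \<union> (if (\<exists>j\<in>Oc. e < j + L) then {} else {e})"
  using assms unfolding starts_def by (auto; fastforce)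

lemma occs_E_le: "i \<in> occs w (a @ w) \<Longrightarrow> i \<le> length a"
  using occs_bound[of i w "a @ w"] by simp

lemma cl_EM:
  assumes m: "m \<in> langM w" and w: "w \<noteq> []"
  shows "cl w (a @ w @ m) = cl w (a @ w) + (if length m < length w then 0 else 1)"
proof -
  have m0: "m \<noteq> []" using m by (auto simp: langM_iff)
  have lt: "\<forall>j\<in>occs w (a @ w). j < length a + length m"
    using occs_E_le m0 by (metis add_less_le_mono le_add1 length_greater_0_conv le_less_trans add.right_neutral add_less_cancel_left le_neq_implies_less less_add_same_cancel1)
  have ex: "(\<exists>j\<in>occs w (a @ w). length a + length m < j + length w) \<longleftrightarrow> length m < length w"
  proof
    assume "\<exists>j\<in>occs w (a @ w). length a + length m < j + length w"
    then obtain j where "j \<in> occs w (a @ w)" "length a + length m < j + length w" by auto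
    then show "length m < length w" using occs_E_le by fastforce
  next
    assume "length m < length w"
    then have "length a + length m < length a + length w" by simp
    then show "\<exists>j\<in>occs w (a @ w). length a + length m < j + length w" using end_occ[of a w] by blast
  qed
  have notin: "length a + length m \<notin> occs w (a @ w)" using lt by auto
  have fin: "finite (starts (length w) (occs w (a @ w)))"
    using occs_finite[of w "a @ w"] by (auto simp: starts_def)
  have notin2: "length a + length m \<notin> starts (length w) (occs w (a @ w))"
    using notin by (auto simp: starts_def)
  show ?thesis
    unfolding cl_def occs_EM[OF m] starts_insert[OF lt] ex
    using fin notin2 by auto
qed

lemma cl_EU:
  assumes u: "u \<in> langU w"
  shows "cl w (a @ w @ u) = cl w (a @ w)"
  unfolding cl_def occs_EU[OF u] ..

lemma cl_R:
  assumes r: "r \<in> langR w"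
  shows "cl w r = 1"
proof -
  from r obtain a where a: "r = a @ w" and b: "\<forall>i\<in>occs w r. length r \<le> i + length w"
    by (auto simp: langR_iff)
  have "occs w r = {length a}"
  proof
    show "occs w r \<subseteq> {length a}"
    proof
      fix i assume i: "i \<in> occs w r"
      then show "i \<in> {length a}" using b occs_bound[OF i] a by fastforce
    qed
  qed (use a end_occ in auto)
  moreover have "starts (length w) {length a} = {length a}" by (auto simp: starts_def)
  ultimately show ?thesis by (simp add: cl_def)
qed

lemma cl_N: "n \<in> langN w \<Longrightarrow> cl w n = 0"
  by (simp add: cl_def langN_iff starts_def)

lemma cl_le: "w \<noteq> [] \<Longrightarrow> cl w x \<le> length x"
proof -
  assume w: "w \<noteq> []"
  have "starts (length w) (occs w x) \<subseteq> {..<length x}"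
  proof
    fix i assume "i \<in> starts (length w) (occs w x)"
    then have "i + length w \<le> length x" by (auto simp: starts_def occs_def)
    then show "i \<in> {..<length x}" using w by (cases w) auto
  qed
  then show ?thesis unfolding cl_def using card_mono[of "{..<length x}"] by fastforce
qed



lemma inj_concat:
  assumes "\<And>t b t' b'. t \<in> A \<Longrightarrow> b \<in> B \<Longrightarrow> t' \<in> A \<Longrightarrow> b' \<in> B \<Longrightarrow> t @ b = t' @ b' \<Longrightarrow> length t < length t' \<Longrightarrow> False"
  shows "inj_on (\<lambda>(a,b). a @ b) (A \<times> B)"
proof (rule inj_onI, clarify)
  fix t b t' b' assume h: "t \<in> A" "b \<in> B" "t' \<in> A" "b' \<in> B" "t @ b = t' @ b'"
  have "length t = length t'"
    using assms[OF h] assms[OF h(3,4,1,2) h(5)[symmetric]] by (metis linorder_neqE_nat)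
  then show "t = t' \<and> b = b'" using h(5) by (simp add: append_eq_append_conv)
qed

lemma split_max:
  assumes "i0 \<in> occs w x"
  shows "x = (take i0 x @ w) @ drop (i0 + length w) x" "drop i0 x = w @ drop (i0 + length w) x"
    "\<And>j. j \<in> occs w (w @ drop (i0 + length w) x) \<Longrightarrow> i0 + j \<in> occs w x"
proof -
  show "x = (take i0 x @ w) @ drop (i0 + length w) x"
    using occ_decomp(1)[OF assms] by (metis append_take_drop_id)
  show d: "drop i0 x = w @ drop (i0 + length w) x" by (rule occ_decomp(2)[OF assms])
  fix j assume "j \<in> occs w (w @ drop (i0 + length w) x)"
  then have "length (take i0 x) + j \<in> occs w (take i0 x @ drop i0 x)"
    using d occs_shift[of j w "drop i0 x" "take i0 x"] by simp
  moreover have "length (take i0 x) = i0" using occs_bound[OF assms] by simp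
  ultimately show "i0 + j \<in> occs w x" by simp
qed

lemma inj_EM: "inj_on (\<lambda>(a,b). a @ b) (E w \<times> langM w)"
proof (rule inj_concat)
  fix t m t' m' assume h: "t \<in> E w" "m \<in> langM w" "t' \<in> E w" "m' \<in> langM w" "t @ m = t' @ m'"
    "length t < length t'"
  obtain a a' where a: "t = a @ w" "t' = a' @ w" using h by (auto simp: E_def)
  have "length a' \<in> occs w (a' @ w @ m')" using occs_app_left[OF end_occ[of a' w], of m'] by simp
  then have i: "length a' \<in> occs w (a @ w @ m)" using h(5) a by simp
  have m'0: "m' \<noteq> []" using h(4) by (auto simp: langM_iff)
  have len: "length a + length m = length a' + length m'" using arg_cong[OF h(5), of length] a by simp
  have lm': "length m' > 0" using m'0 by simp
  have "length a < length a'" using h(6) a by simp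
  then have lt: "length a' - length a < length m" using len lm' by arith
  from occs_after_E[OF i] show False
  proof
    assume "length a' \<in> occs w (a @ w) \<and> length a' \<le> length a" then show False using h(6) a by simp
  next
    assume "length a \<le> length a' \<and> length a' - length a \<in> occs w (w @ m)"
    then show False using h(2) lt h(6) a by (auto simp: langM_iff)
  qed
qed

lemma inj_EU: "inj_on (\<lambda>(a,b). a @ b) (E w \<times> langU w)"
proof (rule inj_concat)
  fix t m t' m' assume h: "t \<in> E w" "m \<in> langU w" "t' \<in> E w" "m' \<in> langU w" "t @ m = t' @ m'"
    "length t < length t'"
  obtain a a' where a: "t = a @ w" "t' = a' @ w" using h by (auto simp: E_def)
  have "length a' \<in> occs w (a' @ w @ m')" using occs_app_left[OF end_occ[of a' w], of m'] by simp
  then have i: "length a' \<in> occs w (a @ w @ m)" using h(5) a by simp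
  from occs_after_E[OF i] show False
  proof
    assume "length a' \<in> occs w (a @ w) \<and> length a' \<le> length a" then show False using h(6) a by simp
  next
    assume "length a \<le> length a' \<and> length a' - length a \<in> occs w (w @ m)"
    then show False using h(2) h(6) a by (auto simp: langU_iff)
  qed
qed

lemma img_EM: "(\<lambda>(a,b). a @ b) ` (E w \<times> langM w) = E w - langR w"
proof
  show "(\<lambda>(a,b). a @ b) ` (E w \<times> langM w) \<subseteq> E w - langR w"
  proof clarify
    fix t m assume h: "t \<in> E w" "m \<in> langM w"
    obtain a where a: "t = a @ w" using h by (auto simp: E_def)
    obtain b where b: "w @ m = b @ w" and m0: "m \<noteq> []" using h(2) by (auto simp: langM_iff)
    have "t @ m = (a @ b) @ w" using a b by simp
    then have tE: "t @ m \<in> E w" by (auto simp: E_def)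
    have "t @ m \<notin> langR w"
    proof
    assume "t @ m \<in> langR w"
    moreover have "length a \<in> occs w (t @ m)" using a occs_app_left[OF end_occ[of a w]] by simp
    moreover have "length m > 0" using m0 by simp
    ultimately show False using a by (fastforce simp: langR_iff)
    qed
    with tE show "t @ m \<in> E w - langR w" by simp
  qed
next
  show "E w - langR w \<subseteq> (\<lambda>(a,b). a @ b) ` (E w \<times> langM w)"
  proof
    fix x assume x: "x \<in> E w - langR w"
    then obtain a0 where a0: "x = a0 @ w" by (auto simp: E_def)
    define S where "S = {i \<in> occs w x. i + length w < length x}"
    have "S \<noteq> {}" using x a0 by (auto simp: langR_iff S_def not_le)
    moreover have "finite S" using occs_finite[of w x] by (auto simp: S_def)
    ultimately have i0S: "Max S \<in> S" and maxS: "\<And>j. j \<in> S \<Longrightarrow> j \<le> Max S" by auto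
    define i0 where "i0 = Max S"
    have i0: "i0 \<in> occs w x" "i0 + length w < length x" using i0S by (auto simp: S_def i0_def)
    define m where "m = drop (i0 + length w) x"
    note sp = split_max[OF i0(1), folded m_def]
    have lm: "length x = i0 + length w + length m" using i0 by (simp add: m_def)
    have "m \<in> langM w" unfolding langM_iff
    proof (intro conjI ballI)
      show "m \<noteq> []" using i0 by (simp add: m_def)
      have "i0 \<le> length a0" using i0 a0 by simp
      then have "drop i0 x = drop i0 a0 @ w" using a0 by simp
      then show "\<exists>b. w @ m = b @ w" using sp(2) by auto
    next
      fix j assume j: "j \<in> occs w (w @ m)"
      show "j = 0 \<or> length m \<le> j"
      proof (rule ccontr)
        assume "\<not> (j = 0 \<or> length m \<le> j)"
        then have "i0 + j \<in> S" using sp(3)[OF j] lm by (auto simp: S_def)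
        then show False using maxS \<open>\<not> (j = 0 \<or> length m \<le> j)\<close> by (fastforce simp: i0_def)
      qed
    qed
    moreover have "take i0 x @ w \<in> E w" by (auto simp: E_def)
    ultimately show "x \<in> (\<lambda>(a,b). a @ b) ` (E w \<times> langM w)"
      using sp(1) by (auto intro!: image_eqI[of _ _ "(take i0 x @ w, m)"])
  qed
qed

lemma img_EU: "(\<lambda>(a,b). a @ b) ` (E w \<times> langU w) = {x. occs w x \<noteq> {}}"
proof
  show "(\<lambda>(a,b). a @ b) ` (E w \<times> langU w) \<subseteq> {x. occs w x \<noteq> {}}"
    using occs_app_left[OF end_occ] by (fastforce simp: E_def)
next
  show "{x. occs w x \<noteq> {}} \<subseteq> (\<lambda>(a,b). a @ b) ` (E w \<times> langU w)"
  proof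
    fix x assume x: "x \<in> {x. occs w x \<noteq> {}}"
    define S where "S = occs w x"
    have "S \<noteq> {}" using x by (auto simp: S_def)
    moreover have "finite S" using occs_finite[of w x] by (auto simp: S_def)
    ultimately have i0S: "Max S \<in> S" and maxS: "\<And>j. j \<in> S \<Longrightarrow> j \<le> Max S" by auto
    define i0 where "i0 = Max S"
    have i0: "i0 \<in> occs w x" using i0S by (auto simp: S_def i0_def)
    define u where "u = drop (i0 + length w) x"
    note sp = split_max[OF i0(1), folded u_def]
    have "u \<in> langU w" unfolding langU_iff
    proof
      fix j assume j: "j \<in> occs w (w @ u)"
      have "i0 + j \<in> S" using sp(3)[OF j] by (simp add: S_def)
      then have "i0 + j \<le> i0" unfolding i0_def by (rule maxS)
      then show "j = 0" by simp
    qed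
    moreover have "take i0 x @ w \<in> E w" by (auto simp: E_def)
    ultimately show "x \<in> (\<lambda>(a,b). a @ b) ` (E w \<times> langU w)"
      using sp(1) by (auto intro!: image_eqI[of _ _ "(take i0 x @ w, u)"])
  qed
qed



lemma lhs_gfw:
  assumes w: "2 \<le> length w"
  shows "Abs_fps (\<lambda>n. \<Sum>i\<le>n. clump_prob p w n i * u ^ i) = gfw p (\<lambda>x. u ^ cl w x) UNIV"
proof (rule fps_ext)
  fix n
  have w0: "w \<noteq> []" using w by auto
  define X where "X = {x::'a list. length x = n}"
  have finX: "finite X" unfolding X_def using fin_len[of "\<lambda>_. True" n] by simp
  have "(\<Sum>i\<le>n. clump_prob p w n i * u ^ i) = (\<Sum>i\<le>n. \<Sum>x\<in>{x \<in> X. cl w x = i}. wprob p x * u ^ cl w x)"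
  proof (rule sum.cong[OF refl])
    fix i assume "i \<in> {..n}"
    have s: "{x. length x = n \<and> card (clumps w x) = i} = {x \<in> X. cl w x = i}"
      using card_clumps[of w] w by (auto simp: X_def)
    show "clump_prob p w n i * u ^ i = (\<Sum>x\<in>{x \<in> X. cl w x = i}. wprob p x * u ^ cl w x)"
      unfolding clump_prob_def s sum_distrib_right by (rule sum.cong) auto
  qed
  also have "\<dots> = (\<Sum>x\<in>X. wprob p x * u ^ cl w x)"
    by (rule sum.group[OF finX]) (use cl_le[OF w0] in \<open>auto simp: X_def\<close>)
  finally show "fps_nth (Abs_fps (\<lambda>n. \<Sum>i\<le>n. clump_prob p w n i * u ^ i)) n = fps_nth (gfw p (\<lambda>x. u ^ cl w x) UNIV) n"
    by (simp add: gfw_def X_def)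
qed

lemma gfw_M0: "fps_nth (gfw p g (langM w)) 0 = 0"
proof -
  have "{x. x \<in> langM w \<and> length x = 0} = {}" by (auto simp: langM_iff)
  then show ?thesis unfolding gfw_def fps_nth_Abs_fps by (simp only: sum.empty)
qed

lemma main:
  fixes p :: "'a::finite \<Rightarrow> real" and w :: "'a list" and u :: real
  assumes w: "2 \<le> length w"
  shows "Abs_fps (\<lambda>n. \<Sum>i\<le>n. clump_prob p w n i * u ^ i) =
         lang_gf p (langN w) +
         fps_const u * lang_gf p (langR w) * lang_gf p (langU w) *
           inverse (1 - fps_const u * lang_gf p (langM w)
                      + fps_const (u - 1) * lang_gf p (langK w))"
proof -
  have w0: "w \<noteq> []" using w by auto
  define f where "f = (\<lambda>x. u ^ cl w x)"
  define g where "g = (\<lambda>m::'a list. if length m < length w then 1 else u)"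
  define Ef where "Ef = gfw p f (E w)"
  define G where "G = gfw p g (langM w)"
  define T1 where "T1 = {x::'a list. occs w x \<noteq> {}}"
  have U1: "UNIV = langN w \<union> T1" "langN w \<inter> T1 = {}" by (auto simp: T1_def langN_iff)
  have N: "gfw p f (langN w) = lang_gf p (langN w)"
    unfolding lang_gf_gfw by (rule gfw_cong) (simp add: f_def cl_N)
  have T: "gfw p f T1 = Ef * lang_gf p (langU w)"
    unfolding Ef_def lang_gf_gfw T1_def
    by (rule gf_concat[OF img_EU inj_EU]) (auto simp: E_def f_def cl_EU)
  have RE: "langR w \<subseteq> E w" by (auto simp: langR_iff E_def)
  have E1: "Ef = gfw p f (langR w) + gfw p f (E w - langR w)"
    unfolding Ef_def using RE gfw_union[of "langR w" "E w - langR w" p f]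
    by (simp add: Un_absorb1 Un_Diff_cancel)
  have R: "gfw p f (langR w) = fps_const u * lang_gf p (langR w)"
    unfolding gfw_const[symmetric] by (rule gfw_cong) (simp add: f_def cl_R)
  have EM: "gfw p f (E w - langR w) = Ef * G"
    unfolding Ef_def G_def
    by (rule gf_concat[OF img_EM inj_EM]) (auto simp: E_def f_def g_def cl_EM[OF _ w0] power_add)
  have KM: "langK w \<subseteq> langM w" by (auto simp: langK_iff)
  have Mdec: "langM w = langK w \<union> (langM w - langK w)" "langK w \<inter> (langM w - langK w) = {}"
    using KM by auto
  have GK: "gfw p g (langK w) = lang_gf p (langK w)"
    unfolding lang_gf_gfw by (rule gfw_cong) (simp add: g_def langK_iff)
  have GMK: "gfw p g (langM w - langK w) = fps_const u * lang_gf p (langM w - langK w)"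
    unfolding gfw_const[symmetric] by (rule gfw_cong) (simp add: g_def langK_iff)
  have Gs: "G = lang_gf p (langK w) + fps_const u * lang_gf p (langM w - langK w)"
    unfolding G_def by (subst Mdec(1), subst gfw_union[OF Mdec(2)]) (simp add: GK GMK)
  have Ms: "lang_gf p (langM w) = lang_gf p (langK w) + lang_gf p (langM w - langK w)"
    unfolding lang_gf_gfw by (subst Mdec(1), subst gfw_union[OF Mdec(2)]) simp
  define D where "D = 1 - fps_const u * lang_gf p (langM w) + fps_const (u - 1) * lang_gf p (langK w)"
  have DG: "D = 1 - G"
    unfolding D_def Gs Ms by (simp add: algebra_simps fps_const_sub[symmetric])
  have D0: "fps_nth D 0 = 1" unfolding DG using gfw_M0[of p g w] by (simp add: G_def)
  have "Ef = fps_const u * lang_gf p (langR w) + Ef * G" using E1 R EM by simp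
  then have "Ef * D = fps_const u * lang_gf p (langR w)" unfolding DG by (simp add: algebra_simps)
  then have "Ef * D * inverse D = fps_const u * lang_gf p (langR w) * inverse D" by simp
  then have EfD: "Ef = fps_const u * lang_gf p (langR w) * inverse D"
    using inverse_mult_eq_1'[of D] D0 by (simp add: mult.assoc)
  have "Abs_fps (\<lambda>n. \<Sum>i\<le>n. clump_prob p w n i * u ^ i) = gfw p f UNIV"
    unfolding f_def by (rule lhs_gfw[OF w])
  also have "\<dots> = lang_gf p (langN w) + Ef * lang_gf p (langU w)"
    by (subst U1(1), subst gfw_union[OF U1(2)]) (simp add: N T)
  also have "\<dots> = lang_gf p (langN w) + fps_const u * lang_gf p (langR w) * lang_gf p (langU w) * inverse D"
    by (simp add: EfD algebra_simps)
  finally show ?thesis unfolding D_def .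
qed


theorem mainTheorem5:
  fixes p :: "'a::finite \<Rightarrow> real" and w :: "'a list" and u :: real
  assumes "card (UNIV :: 'a set) \<ge> 2"
    and "\<And>a. p a > 0"
    and "(\<Sum>a\<in>UNIV. p a) = 1"
    and "length w \<ge> 2"
  shows "Abs_fps (\<lambda>n. \<Sum>i\<le>n. clump_prob p w n i * u ^ i) =
         lang_gf p (langN w) +
         fps_const u * lang_gf p (langR w) * lang_gf p (langU w) *
           inverse (1 - fps_const u * lang_gf p (langM w)
                      + fps_const (u - 1) * lang_gf p (langK w))"
  using main[OF assms(4)] .

end
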